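(* For each $n$ let $p=p_n\in[0,1]$, let $X\sim\mathrm{Bin}(n,p)$ and $R = R_n = 1 + X + \frac{X(X-1)}{2}$. If $np\to\infty$ as $n\to\infty$, then $$\mathbb{V}(R) = n^3p^3(1-p)(1+o(1)) \quad (n\to\infty).$$
   Context: $\mathbb{V}$ denotes variance. $R$ is the number of regions formed when $n$ cuts are attempted on a pizza, each succeeding independently with probability $p$, with every successful cut meeting all prior successful cuts. *)

theory Defs
  imports "HOL-Probability.Probability"
begin

text \<open>Number of pizza regions when X of the attempted cuts succeed:
  R = 1 + X + X(X-1)/2, as a real number.\<close>
definition regions :: "nat \<Rightarrow> real" where
  "regions x = 1 + real x + real x * (real x - 1) / 2"

definition var_R :: "nat \<Rightarrow> real \<Rightarrow> real" where
  "var_R n q = measure_pmf.variance (binomial_pmf n q) regions"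

end

theory Submission
  imports Defs
begin

definition ff :: "real \<Rightarrow> nat \<Rightarrow> real" where
  "ff x j = (\<Prod>i<j. x - real i)"

lemma ff_0[simp]: "ff x 0 = 1" by (simp add: ff_def)
lemma ff_Suc: "ff x (Suc j) = x * ff (x - 1) j"
  unfolding ff_def by (subst prod.lessThan_Suc_shift) (simp add: algebra_simps)

lemma binom_sum1:
  "(\<Sum>k\<le>n. real (n choose k) * p^k * (1-p)^(n-k)) = (1::real)"
proof -
  have "(p + (1-p))^n = (\<Sum>k\<le>n. real (n choose k) * p^k * (1-p)^(n-k))"
    by (subst binomial_ring) (simp add: atLeast0AtMost)
  then show ?thesis by simp
qed

lemma ffm:
  "(\<Sum>k\<le>n. real (n choose k) * p^k * (1-p)^(n-k) * ff (real k) j) = ff (real n) j * p^j"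
proof (induction j arbitrary: n)
  case 0
  then show ?case using binom_sum1[of n p] by simp
next
  case (Suc j)
  show ?case
  proof (cases n)
    case 0
    then show ?thesis by (simp add: ff_Suc)
  next
    case (Suc m)
    have "(\<Sum>k\<le>n. real (n choose k) * p^k * (1-p)^(n-k) * ff (real k) (Suc j))
        = (\<Sum>k\<le>m. real (Suc m choose Suc k) * p^Suc k * (1-p)^(m-k) * ff (real (Suc k)) (Suc j))"
      unfolding Suc by (subst sum.atMost_Suc_shift) (simp add: ff_Suc)
    also have "\<dots> = (\<Sum>k\<le>m. (real (Suc m) * p) * (real (m choose k) * p^k * (1-p)^(m-k) * ff (real k) j))"
    proof (rule sum.cong[OF refl])
      fix k assume "k \<in> {..m}"
      have e: "real (Suc m choose Suc k) * real (Suc k) = real (Suc m) * real (m choose k)"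
        using Suc_times_binomial_eq[of m k] by (metis of_nat_mult)
      have "real (Suc m choose Suc k) * p^Suc k * (1-p)^(m-k) * ff (real (Suc k)) (Suc j)
          = (real (Suc m choose Suc k) * real (Suc k)) * p^Suc k * (1-p)^(m-k) * ff (real k) j"
        by (simp add: ff_Suc)
      also have "\<dots> = (real (Suc m) * p) * (real (m choose k) * p^k * (1-p)^(m-k) * ff (real k) j)"
        unfolding e by simp
      finally show "real (Suc m choose Suc k) * p^Suc k * (1-p)^(m-k) * ff (real (Suc k)) (Suc j)
          = (real (Suc m) * p) * (real (m choose k) * p^k * (1-p)^(m-k) * ff (real k) j)" .
    qed
    also have "\<dots> = (real (Suc m) * p) * (ff (real m) j * p^j)"
      by (simp add: sum_distrib_left[symmetric] Suc.IH)
    also have "\<dots> = ff (real n) (Suc j) * p ^ Suc j"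
      unfolding Suc by (simp add: ff_Suc)
    finally show ?thesis .
  qed
qed

lemma lin5:
  "(\<Sum>k\<le>n. w k * (a0 + a1*ff (real k) 1 + a2*ff (real k) 2 + a3*ff (real k) 3 + a4*ff (real k) 4))
   = a0*(\<Sum>k\<le>n. w k) + a1*(\<Sum>k\<le>n. w k * ff (real k) 1) + a2*(\<Sum>k\<le>n. w k * ff (real k) 2)
     + a3*(\<Sum>k\<le>n. w k * ff (real k) 3) + a4*(\<Sum>k\<le>n. w k * ff (real k) 4)"
  by (simp add: distrib_left sum.distrib sum_distrib_left sum_distrib_right mult.left_commute mult.commute)

lemma ff_nums: "ff x 1 = x" "ff x 2 = x*(x-1)" "ff x 3 = x*(x-1)*(x-2)"
  "ff x 4 = x*(x-1)*(x-2)*(x-3)"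
  by (simp_all add: eval_nat_numeral ff_Suc algebra_simps)

lemma var_formula:
  assumes "0 \<le> q" "q \<le> 1"
  shows "var_R n q = (1-q)*(real n*q + 2*real n*(real n-1)*q^2
            + real n*(real n-1)*q^2*((2*real n-3)*q+1)/2)"
proof -
  define w where "w k = real (n choose k) * q^k * (1-q)^(n-k)" for k
  have S: "(\<Sum>k\<le>n. w k * ff (real k) j) = ff (real n) j * q^j" for j
    using ffm[of n q j] unfolding w_def by simp
  have S0: "(\<Sum>k\<le>n. w k) = 1" using binom_sum1[of n q] unfolding w_def by simp
  have E: "measure_pmf.expectation (binomial_pmf n q) f = (\<Sum>k\<le>n. w k * f k)" for f :: "nat \<Rightarrow> real"
    using assms by (simp add: expectation_binomial_pmf' w_def)
  define c where "c = 1 + real n * q + real n * (real n - 1) * q^2 / 2"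
  have reg: "regions k = 1 + 1*ff (real k) 1 + (1/2)*ff (real k) 2 + 0*ff (real k) 3 + 0*ff (real k) 4" for k
    by (simp add: regions_def ff_Suc eval_nat_numeral field_simps)
  have Ec: "measure_pmf.expectation (binomial_pmf n q) regions = c"
    unfolding E reg lin5 S S0 c_def by (simp add: ff_Suc eval_nat_numeral field_simps)
  have sq: "(regions k - c)^2 = (1 - 2*c + c^2) + (3 - 2*c)*ff (real k) 1 + (9/2 - c)*ff (real k) 2
      + 2*ff (real k) 3 + (1/4)*ff (real k) 4" for k
    unfolding regions_def by (simp add: ff_Suc eval_nat_numeral power2_eq_square field_simps)
  have "var_R n q = (\<Sum>k\<le>n. w k * (regions k - c)^2)"
    unfolding var_R_def Ec by (simp add: E Ec[unfolded E])
  also have "\<dots> = (1 - 2*c + c^2) + (3 - 2*c)*(real n * q) + (9/2 - c)*(real n*(real n-1)*q^2)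
      + 2*(real n*(real n-1)*(real n-2)*q^3) + (1/4)*(real n*(real n-1)*(real n-2)*(real n-3)*q^4)"
    unfolding sq lin5 S S0 by (simp add: ff_Suc eval_nat_numeral field_simps)
  also have "\<dots> = (1-q)*(real n*q + 2*real n*(real n-1)*q^2
            + real n*(real n-1)*q^2*((2*real n-3)*q+1)/2)"
    unfolding c_def by (simp add: divide_simps) (simp add: algebra_simps power2_eq_square power3_eq_cube eval_nat_numeral)
  finally show ?thesis .
qed

lemma e_bound:
  fixes n :: nat and q x :: real
  assumes "0 \<le> q" "q \<le> 1" "x = real n * q" "x \<ge> 1"
  shows "\<bar>1/x^2 + 2*(real n-1)/(real n*x) + (real n-1)*(1-3*q)/(2*real n*x) - 1/real n\<bar>
         \<le> 1/x^2 + 3/x + 1/real n"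
proof -
  have n: "real n > 0" using assms by (cases n) auto
  have x: "x > 0" using assms by simp
  have r: "0 \<le> (real n - 1)/real n" "(real n - 1)/real n \<le> 1"
    using n assms by (auto simp: field_simps)
  have a: "2*(real n-1)/(real n*x) = 2*((real n - 1)/real n)/x" by simp
  have b: "(real n-1)*(1-3*q)/(2*real n*x) = ((real n - 1)/real n)*((1-3*q)/2)/x" by simp
  have a0: "\<And>t. 0 \<le> t \<Longrightarrow> t \<le> 1 \<Longrightarrow> 0 \<le> 2*t/x \<and> 2*t/x \<le> 2/x"
    using x by (auto intro: divide_right_mono)
  have a1: "0 \<le> 2*((real n - 1)/real n)/x" "2*((real n - 1)/real n)/x \<le> 2/x"
    using a0[OF r] by auto
  have "\<bar>((real n - 1)/real n)*((1-3*q)/2)\<bar> \<le> 1"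
  proof -
    have "\<bar>(1-3*q)/2\<bar> \<le> 1" using assms by auto
    moreover have "\<And>a b::real. 0 \<le> a \<Longrightarrow> a \<le> 1 \<Longrightarrow> abs b \<le> 1 \<Longrightarrow> abs (a*b) \<le> 1"
      by (simp add: abs_mult mult_le_one)
    ultimately show ?thesis using r by blast
  qed
  moreover have "\<And>y. abs y \<le> 1 \<Longrightarrow> abs (y/x) \<le> 1/x"
    using x by (simp add: divide_right_mono)
  ultimately have b1: "\<bar>((real n - 1)/real n)*((1-3*q)/2)/x\<bar> \<le> 1/x"
    by blast
  have c1: "0 \<le> 1/x^2" "0 \<le> 1/real n" using x n by auto
  have d: "3/x = 2/x + 1/x" by (simp add: add_divide_distrib[symmetric])
  have key: "\<And>A B C D E F::real. 0 \<le> A \<Longrightarrow> 0 \<le> B \<Longrightarrow> B \<le> E \<Longrightarrow> abs C \<le> F \<Longrightarrow> 0 \<le> D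
     \<Longrightarrow> abs (A + B + C - D) \<le> A + (E + F) + D" by (simp add: abs_le_iff)
  show ?thesis unfolding a b d by (rule key[OF c1(1) a1 b1 c1(2)])
qed

lemma main_eq:
  fixes n :: nat and q x :: real
  assumes "0 \<le> q" "q \<le> 1" "x = real n * q" "x > 0"
  shows "var_R n q = x^3 * (1 - q) *
     (1 + (1/x^2 + 2*(real n-1)/(real n*x) + (real n-1)*(1-3*q)/(2*real n*x) - 1/real n))"
proof -
  have n: "real n > 0" using assms by (cases n) auto
  have qp: "q > 0" using assms n by (simp add: zero_less_mult_iff)
  show ?thesis unfolding var_formula[OF assms(1,2)] assms(3) using n qp
    by (simp add: divide_simps) (simp add: algebra_simps power2_eq_square power3_eq_cube eval_nat_numeral)
qed

theorem theorem3:
  fixes p :: "nat \<Rightarrow> real"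
  assumes "\<And>n. 0 \<le> p n \<and> p n \<le> 1"
    and "filterlim (\<lambda>n. real n * p n) at_top sequentially"
  shows "\<exists>e :: nat \<Rightarrow> real. e \<longlonglongrightarrow> 0 \<and>
    (\<forall>\<^sub>F n in sequentially.
       var_R n (p n) = (real n * p n) ^ 3 * (1 - p n) * (1 + e n))"
proof -
  define x where "x n = real n * p n" for n
  define e where "e n = 1/(x n)^2 + 2*(real n-1)/(real n*x n) + (real n-1)*(1-3*p n)/(2*real n*x n) - 1/real n" for n
  have ev: "\<forall>\<^sub>F n in sequentially. x n \<ge> 1"
    using assms(2) unfolding x_def filterlim_at_top by blast
  have ix: "(\<lambda>n. inverse (x n)) \<longlonglongrightarrow> 0"
    using tendsto_inverse_0_at_top[OF assms(2)] unfolding x_def .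
  have g: "(\<lambda>n. 1/(x n)^2 + 3/x n + 1/real n) \<longlonglongrightarrow> 0"
  proof -
    have "(\<lambda>n. inverse (x n) * inverse (x n) + 3 * inverse (x n) + 1 / real n) \<longlonglongrightarrow> 0 * 0 + 3 * 0 + 0"
      by (intro tendsto_intros ix lim_1_over_n)
    then show ?thesis by (simp add: power2_eq_square divide_inverse)
  qed
  have "e \<longlonglongrightarrow> 0"
  proof (rule Lim_null_comparison[OF _ g])
    show "\<forall>\<^sub>F n in sequentially. norm (e n) \<le> 1/(x n)^2 + 3/x n + 1/real n"
      using ev proof eventually_elim
      case (elim n)
      then show ?case unfolding e_def real_norm_def
        using e_bound[of "p n" "x n" n] assms(1)[of n] x_def by simp
    qed
  qed
  moreover have "\<forall>\<^sub>F n in sequentially.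
       var_R n (p n) = (real n * p n) ^ 3 * (1 - p n) * (1 + e n)"
    using ev proof eventually_elim
    case (elim n)
    then show ?case unfolding e_def
      using main_eq[of "p n" "x n" n] assms(1)[of n] x_def by simp
  qed
  ultimately show ?thesis by blast
qed

end
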